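(* Let $p_0>p_1>p_2\geq\ldots\geq p_N$ be reals in $[0,1]$ with $p_0-p_1=p_1-p_2$. Define $\mathbf{p}^0,\ldots,\mathbf{p}^N\in[0,1]^N$ by $\mathbf{p}^0_i=p_i$ for $1\le i\le N$, and for $1\le j\le N$, $\mathbf{p}^j_i=p_i$ ($i\ne j$), $\mathbf{p}^j_j=p_0$. Then for all $1\leq j\leq N$, $$\frac14H(\mathbf{p}^0)\leq H(\mathbf{p}^j)\leq 2H(\mathbf{p}^0).$$
   Context: For a vector $\mathbf{q}$ with a unique largest entry $q_{i^*}$, $H(\mathbf{q})=\sum_{i\neq i^*}(q_{i^*}-q_i)^{-2}$. Thus $H(\mathbf{p}^0)=\sum_{i\ge2}(p_1-p_i)^{-2}$ and $H(\mathbf{p}^j)=\sum_{i\ne j}(p_0-p_i)^{-2}$ for $j\ge1$. *)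

theory Defs
  imports Main Complex_Main
begin

text \<open>Vectors in [0,1]^N are represented as functions nat => real on the index set {1..N}.
  For a vector q with a unique largest entry q(istar), H q = sum over i ~= istar of (q istar - q i)^(-2).\<close>

definition top_index :: "nat \<Rightarrow> (nat \<Rightarrow> real) \<Rightarrow> nat" where
  "top_index N q = (THE i. i \<in> {1..N} \<and> (\<forall>k\<in>{1..N}. k \<noteq> i \<longrightarrow> q k < q i))"

definition H :: "nat \<Rightarrow> (nat \<Rightarrow> real) \<Rightarrow> real" where
  "H N q = (let s = top_index N q in
     \<Sum>i\<in>{1..N} - {s}. 1 / (q s - q i)^2)"

definition pvec :: "(nat \<Rightarrow> real) \<Rightarrow> nat \<Rightarrow> (nat \<Rightarrow> real)" where
  "pvec p j = (\<lambda>i. if j \<ge> 1 \<and> i = j then p 0 else p i)"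

end

theory Submission
  imports Defs
begin

lemma top_index_eq:
  assumes "s \<in> {1..N}" "\<And>k. k \<in> {1..N} \<Longrightarrow> k \<noteq> s \<Longrightarrow> q k < q s"
  shows "top_index N q = s"
  unfolding top_index_def
proof (rule the_equality)
  show "s \<in> {1..N} \<and> (\<forall>k\<in>{1..N}. k \<noteq> s \<longrightarrow> q k < q s)" using assms by blast
next
  fix i assume "i \<in> {1..N} \<and> (\<forall>k\<in>{1..N}. k \<noteq> i \<longrightarrow> q k < q i)"
  then have "i \<in> {1..N}" "\<forall>k\<in>{1..N}. k \<noteq> i \<longrightarrow> q k < q i" by auto
  then show "i = s" using assms by (metis less_asym)
qed

lemma H_eq:
  assumes "s \<in> {1..N}" "\<And>k. k \<in> {1..N} \<Longrightarrow> k \<noteq> s \<Longrightarrow> q k < q s"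
  shows "H N q = (\<Sum>i\<in>{1..N} - {s}. 1 / (q s - q i)^2)"
  unfolding H_def Let_def using top_index_eq[of s N q] assms by simp

lemma inv_sq_mono:
  fixes x y :: real
  assumes "0 < x" "x \<le> y"
  shows "1 / y^2 \<le> 1 / x^2"
proof -
  have "x^2 \<le> y^2" using assms by (simp add: power_mono)
  moreover have "0 < x^2" using assms by simp
  ultimately show ?thesis by (simp add: frac_le)
qed

lemma inv_sq_quarter:
  fixes x y :: real
  assumes "0 < x" "y \<le> 2 * x" "0 < y"
  shows "1 / x^2 / 4 \<le> 1 / y^2"
proof -
  have "1 / (2*x)^2 \<le> 1 / y^2" using inv_sq_mono[OF assms(3) assms(2)] .
  then show ?thesis by (simp add: power_mult_distrib)
qed

theorem lemma7:
  fixes p :: "nat \<Rightarrow> real" and N :: nat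
  assumes "N \<ge> 2"
    and "\<And>i. i \<le> N \<Longrightarrow> 0 \<le> p i \<and> p i \<le> 1"
    and "p 0 > p 1" and "p 1 > p 2"
    and "\<And>i. 2 \<le> i \<Longrightarrow> i < N \<Longrightarrow> p i \<ge> p (Suc i)"
    and "p 0 - p 1 = p 1 - p 2"
  shows "\<forall>j\<in>{1..N}. H N (pvec p 0) / 4 \<le> H N (pvec p j) \<and> H N (pvec p j) \<le> 2 * H N (pvec p 0)"
proof
  define d where "d = p 1 - p 2"
  have dpos: "d > 0" using assms(4) d_def by simp
  have le2: "p i \<le> p 2" if "2 \<le> i" "i \<le> N" for i
    using that
  proof (induction i rule: dec_induct)
    case base then show ?case by simp
  next
    case (step m)
    then show ?case using assms(5)[of m] by simp
  qed
  have xge: "p 1 - p i \<ge> d" if "i \<in> {2..N}" for i using le2[of i] that d_def by auto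
  define a where "a i = 1 / (p 1 - p i)^2" for i
  define b where "b i = 1 / (p 0 - p i)^2" for i
  have p0: "pvec p 0 = p" unfolding pvec_def by auto
  have H0: "H N p = (\<Sum>i\<in>{1..N} - {1}. a i)"
  proof -
    have "H N p = (\<Sum>i\<in>{1..N} - {1}. 1 / (p 1 - p i)^2)"
    proof (rule H_eq)
      show "1 \<in> {1..N}" using assms(1) by simp
      fix k assume "k \<in> {1..N}" "k \<noteq> 1"
      then show "p k < p 1" using le2[of k] assms(4) by auto
    qed
    then show ?thesis unfolding a_def by simp
  qed
  have ab: "b i \<le> a i" "a i / 4 \<le> b i" if "i \<in> {2..N}" for i
  proof -
    have x: "p 1 - p i \<ge> d" using xge that .
    have e: "p 0 - p i = (p 1 - p i) + d" using assms(6) d_def by simp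
    show "b i \<le> a i" unfolding a_def b_def e
      using inv_sq_mono[of "p 1 - p i" "(p 1 - p i) + d"] x dpos by simp
    show "a i / 4 \<le> b i" unfolding a_def b_def e
      using inv_sq_quarter[of "p 1 - p i" "(p 1 - p i) + d"] x dpos by simp
  qed
  have anonneg: "a i \<ge> 0" for i unfolding a_def by simp
  have a2: "a 2 = 1 / d^2" unfolding a_def d_def by simp
  have aj: "a i \<le> 1 / d^2" if "i \<in> {2..N}" for i
    unfolding a_def using inv_sq_mono[of d "p 1 - p i"] xge[OF that] dpos by simp
  have H0ge: "H N p \<ge> 1 / d^2"
  proof -
    have "a 2 \<le> (\<Sum>i\<in>{1..N} - {1}. a i)"
      by (rule member_le_sum) (use assms(1) anonneg in auto)
    then show ?thesis using H0 a2 by simp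
  qed
  fix j assume j: "j \<in> {1..N}"
  have Hj: "H N (pvec p j) = (\<Sum>i\<in>{1..N} - {j}. 1 / (p 0 - p i)^2)"
  proof -
    have "H N (pvec p j) = (\<Sum>i\<in>{1..N} - {j}. 1 / (pvec p j j - pvec p j i)^2)"
    proof (rule H_eq)
      show "j \<in> {1..N}" using j .
      fix k assume k: "k \<in> {1..N}" "k \<noteq> j"
      show "pvec p j k < pvec p j j"
      proof (cases "k = 1")
        case True then show ?thesis using k j assms(3) unfolding pvec_def by auto
      next
        case False then show ?thesis using k j assms(3,4) le2[of k] unfolding pvec_def by auto
      qed
    qed
    also have "\<dots> = (\<Sum>i\<in>{1..N} - {j}. 1 / (p 0 - p i)^2)"
      using j by (intro sum.cong) (auto simp: pvec_def)
    finally show ?thesis .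
  qed
  show "H N (pvec p 0) / 4 \<le> H N (pvec p j) \<and> H N (pvec p j) \<le> 2 * H N (pvec p 0)"
  proof (cases "j = 1")
    case True
    have set: "{1..N} - {1} = {2..N}" by auto
    have Hj': "H N (pvec p j) = (\<Sum>i\<in>{2..N}. b i)" using Hj True set b_def by simp
    have H0': "H N p = (\<Sum>i\<in>{2..N}. a i)" using H0 set by simp
    have "(\<Sum>i\<in>{2..N}. a i) / 4 = (\<Sum>i\<in>{2..N}. a i / 4)" by (simp add: sum_divide_distrib)
    also have "\<dots> \<le> (\<Sum>i\<in>{2..N}. b i)" by (rule sum_mono) (use ab in auto)
    finally have l: "(\<Sum>i\<in>{2..N}. a i) / 4 \<le> (\<Sum>i\<in>{2..N}. b i)" .
    have u: "(\<Sum>i\<in>{2..N}. b i) \<le> (\<Sum>i\<in>{2..N}. a i)" by (rule sum_mono) (use ab in auto)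
    have "0 \<le> (\<Sum>i\<in>{2..N}. a i)" using anonneg by (simp add: sum_nonneg)
    then show ?thesis using l u Hj' H0' p0 by simp
  next
    case False
    define S where "S = {2..N} - {j}"
    have j2: "j \<in> {2..N}" using j False by auto
    have s1: "{1..N} - {j} = insert 1 S" using j False unfolding S_def by auto
    have s2: "{1..N} - {1} = insert j S" using j False unfolding S_def by auto
    have fS: "finite S" "1 \<notin> S" "j \<notin> S" unfolding S_def by auto
    have Hj': "H N (pvec p j) = b 1 + (\<Sum>i\<in>S. b i)"
      using Hj s1 fS b_def by simp
    have b1: "b 1 = 1 / d^2" unfolding b_def d_def using assms(6) by simp
    have H0': "H N p = a j + (\<Sum>i\<in>S. a i)" using H0 s2 fS by simp
    have "(\<Sum>i\<in>S. a i) / 4 = (\<Sum>i\<in>S. a i / 4)" by (simp add: sum_divide_distrib)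
    also have "\<dots> \<le> (\<Sum>i\<in>S. b i)" by (rule sum_mono) (use ab S_def in auto)
    finally have l: "(\<Sum>i\<in>S. a i) / 4 \<le> (\<Sum>i\<in>S. b i)" .
    have u: "(\<Sum>i\<in>S. b i) \<le> (\<Sum>i\<in>S. a i)" by (rule sum_mono) (use ab S_def in auto)
    have "a j \<le> 1 / d^2" using aj j2 by simp
    moreover have "0 \<le> 1 / d^2" by simp
    moreover have "a j \<ge> 0" by (rule anonneg)
    ultimately show ?thesis using l u Hj' H0' p0 b1 H0ge by simp
  qed
qed

end
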